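(* Let $C\in\mathcal R_{\rm dec}$ with $|C|\ge2$ and root share decomposition $C=C_1\circ_kC_2$, where $C_1,C_2$ are decorated by inheritance from $C$ and each is labeled by its own intersection order. Let $d,d_1,d_2$ be the decorations of the base chords of $C,C_1,C_2$ respectively. Then for every integer $l$ with $1<l<b(C)$, $$\hat a_C\,a_{d,\,b(C)-l}=\hat a_{C_1}\,a_{d_1,\,b(C_1)-1}\;\hat a_{C_2}\,a_{d_2,\,b(C_2)-l+1}.$$
   Context: Fix a commutative ring $A$ and elements $a_{k,i}\in A$ ($k\ge1$, $i\ge0$). Chord diagrams. A rooted chord diagram of size $n$ is a fixed-point-free involution $C$ of $\{1,\dots,2n\}$, viewed as $n$ chords (transpositions) $(x\,y)$ with $x<y$; the chord containing $1$ is the root chord; $|C|=n$. Chords $(x\,y),(x'\,y')$ cross if $x<x'<y<y'$ or $x'<x<y'<y$. $C$ is connected if the graph whose vertices are the chords, with edges joining crossing chords, is connected. For a set of $m$ chords with $2m$ distinct positive integer endpoints, $\mathrm{norm}$ of it is the chord diagram on $\{1,\dots,2m\}$ obtained by replacing each endpoint by its rank among the $2m$ endpoints. Intersection order. The chords of a rooted connected chord diagram of size $n$ are labeled $1,\dots,n$ recursively: the root chord gets the first available label; the remaining chords split into connected components (w.r.t. crossing); the components are processed in increasing order of their smallest endpoint, each regarded as a rooted connected chord diagram rooted at its chord with smallest endpoint and labeled recursively with the next block of consecutive labels. "Chord $i$" means the chord with label $i$. Terminal and base chords. Chord $i$ is terminal if it crosses no chord $j$ with $j>i$. If $t_0<t_1<\dots<t_m$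 are the terminal labels, the base chord is $b(C)=t_0$. Insertion of chord diagrams. For $C$ of size $n$ with chords $(x_1y_1),\dots,(x_ny_n)$, root $(x_1y_1)$ ($x_1=1$), $D$ of size $m$ with chords $(x'_iy'_i)$, and $1\le k\le 2m-1$, $C\circ_kD$ is the chord diagram of size $n+m$ with chords $(1,y_1+k)$, $(x_i+k,y_i+k)$ ($2\le i\le n$), $(H(x'_i),H(y'_i))$ ($1\le i\le m$), where $H(x)=x+1$ if $x\le k$ and $H(x)=x+2n$ otherwise. Root share decomposition. For rooted connected $C$ with $|C|\ge2$, let $C_1$ be the connected component (of the chords other than the root) having the smallest endpoint among such components. There is a unique $i$ with $C=C'\circ_iC''$, where $C'=\mathrm{norm}(C\setminus C_1)$, $C''=\mathrm{norm}(C_1)$. (In the lemma, $C_1$ denotes $C'$ and $C_2$ denotes $C''$.) Decorations. A decorated chord diagram is a rooted connected chord diagram with a positive integer $d_i$ on each chord $i$; $\mathcal R_{\rm dec}$ is the set of all of them. Monomial. With terminal labels $t_0<\dots<t_m$, $\hat a_C=\prod_{c=1}^m a_{d_{t_c},t_c-t_{c-1}}\cdot\prod_{i\text{ non-terminal}}a_{d_i,0}$. *)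

theory Defs
  imports Main
begin

type_synonym chord = "nat \<times> nat"

definition ends :: "chord set \<Rightarrow> nat set" where
  "ends S = fst ` S \<union> snd ` S"

definition is_cd :: "chord set \<Rightarrow> bool" where
  "is_cd C \<longleftrightarrow> finite C \<and> (\<forall>c\<in>C. fst c < snd c)
     \<and> (\<forall>c\<in>C. \<forall>c'\<in>C. c \<noteq> c' \<longrightarrow> {fst c, snd c} \<inter> {fst c', snd c'} = {})
     \<and> ends C = {1..2 * card C}"

definition crosses :: "chord \<Rightarrow> chord \<Rightarrow> bool" where
  "crosses c c' \<longleftrightarrow> (fst c < fst c' \<and> fst c' < snd c \<and> snd c < snd c')
                   \<or> (fst c' < fst c \<and> fst c < snd c' \<and> snd c' < snd c)"

definition cross_rel :: "chord set \<Rightarrow> (chord \<times> chord) set" where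
  "cross_rel S = {(c, c'). c \<in> S \<and> c' \<in> S \<and> crosses c c'}"

definition connected_cd :: "chord set \<Rightarrow> bool" where
  "connected_cd S \<longleftrightarrow> (\<forall>c\<in>S. \<forall>c'\<in>S. (c, c') \<in> (cross_rel S)\<^sup>*)"

definition comp :: "chord set \<Rightarrow> chord \<Rightarrow> chord set" where
  "comp S c = {c' \<in> S. (c, c') \<in> (cross_rel S)\<^sup>*}"

definition components :: "chord set \<Rightarrow> chord set set" where
  "components S = comp S ` S"

definition min_end :: "chord set \<Rightarrow> nat" where
  "min_end K = Min (ends K)"

definition comps_sorted :: "chord set \<Rightarrow> chord set list" where
  "comps_sorted S = sorted_key_list_of_set min_end (components S)"

definition root :: "chord set \<Rightarrow> chord" where
  "root S = (THE c. c \<in> S \<and> fst c = Min (ends S))"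

text \<open>intersection order, with fuel (fuel = card S suffices)\<close>
primrec io :: "nat \<Rightarrow> chord set \<Rightarrow> chord list" where
  "io 0 S = []"
| "io (Suc n) S = (if S = {} then [] else
      root S # concat (map (io n) (comps_sorted (S - {root S}))))"

definition int_order :: "chord set \<Rightarrow> chord list" where
  "int_order S = io (card S) S"

text \<open>chord with label i (labels 1..card S)\<close>
definition chord_lab :: "chord set \<Rightarrow> nat \<Rightarrow> chord" where
  "chord_lab S i = int_order S ! (i - 1)"

definition terminal :: "chord set \<Rightarrow> nat \<Rightarrow> bool" where
  "terminal S i \<longleftrightarrow> i \<in> {1..card S} \<and>
     (\<forall>j\<in>{i<..card S}. \<not> crosses (chord_lab S i) (chord_lab S j))"

definition terminals :: "chord set \<Rightarrow> nat set" where
  "terminals S = {i. terminal S i}"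

definition base :: "chord set \<Rightarrow> nat" where
  "base S = Min (terminals S)"

text \<open>the monomial hat a_C; decorations are given as a function on chords\<close>
definition monomial :: "(nat \<Rightarrow> nat \<Rightarrow> 'r::comm_ring_1) \<Rightarrow> (chord \<Rightarrow> nat) \<Rightarrow> chord set \<Rightarrow> 'r" where
  "monomial a d S = (let T = sorted_list_of_set (terminals S) in
     (\<Prod>c\<in>{1..<length T}. a (d (chord_lab S (T ! c))) (T ! c - T ! (c - 1)))
     * (\<Prod>i\<in>{1..card S} - terminals S. a (d (chord_lab S i)) 0))"

definition rank :: "chord set \<Rightarrow> nat \<Rightarrow> nat" where
  "rank S x = card {e \<in> ends S. e \<le> x}"

definition nmap :: "chord set \<Rightarrow> chord \<Rightarrow> chord" where
  "nmap S c = (rank S (fst c), rank S (snd c))"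

definition norm_cd :: "chord set \<Rightarrow> chord set" where
  "norm_cd S = nmap S ` S"

definition inherit :: "(chord \<Rightarrow> nat) \<Rightarrow> chord set \<Rightarrow> chord \<Rightarrow> nat" where
  "inherit d S = (\<lambda>c'. d (inv_into S (nmap S) c'))"

text \<open>root share decomposition: first component of the non-root chords\<close>
definition first_comp :: "chord set \<Rightarrow> chord set" where
  "first_comp C = hd (comps_sorted (C - {root C}))"

definition rs_left :: "chord set \<Rightarrow> chord set" where
  "rs_left C = norm_cd (C - first_comp C)"

definition rs_right :: "chord set \<Rightarrow> chord set" where
  "rs_right C = norm_cd (first_comp C)"

end

theory Submission
  imports Defs
begin



primrec hh :: "(nat\<Rightarrow>bool) \<Rightarrow> (nat\<Rightarrow>nat\<Rightarrow>'r::comm_ring_1) \<Rightarrow> (nat\<Rightarrow>'r) \<Rightarrow> nat option \<Rightarrow> nat \<Rightarrow> nat \<Rightarrow> 'r" where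
  "hh F G H st pos 0 = 1"
| "hh F G H st pos (Suc n) = (if F pos then (case st of None \<Rightarrow> 1 | Some j \<Rightarrow> G pos j) * hh F G H (Some 1) (Suc pos) n
      else H pos * hh F G H (map_option Suc st) (Suc pos) n)"

primrec sa :: "(nat\<Rightarrow>bool) \<Rightarrow> nat option \<Rightarrow> nat \<Rightarrow> nat \<Rightarrow> nat option" where
  "sa F st pos 0 = st"
| "sa F st pos (Suc n) = sa F (if F pos then Some 1 else map_option Suc st) (Suc pos) n"

lemma hh_append: "hh F G H st pos (n1+n2) = hh F G H st pos n1 * hh F G H (sa F st pos n1) (pos+n1) n2"
  by (induction n1 arbitrary: st pos) (auto simp: algebra_simps)

lemma sa_last: "F (pos + n) \<Longrightarrow> sa F st pos (Suc n) = Some 1"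
  by (induction n arbitrary: st pos) auto

lemma sa_none: "(\<forall>i\<in>{pos..<pos+n}. \<not>F i) \<Longrightarrow> sa F None pos n = None"
  by (induction n arbitrary: pos) auto

lemma hh_transfer:
  "(\<forall>i<n. F (pos+i) = F' (pos'+i) \<and> G (pos+i) = G' (pos'+i) \<and> H (pos+i) = H' (pos'+i))
   \<Longrightarrow> hh F G H st pos n = hh F' G' H' st pos' n"
proof (induction n arbitrary: st pos pos')
  case 0 then show ?case by simp
next
  case (Suc n)
  have a: "F pos = F' pos'" "G pos = G' pos'" "H pos = H' pos'" using Suc.prems[rule_format, of 0] by auto
  have "\<forall>i<n. F (Suc pos+i) = F' (Suc pos'+i) \<and> G (Suc pos+i) = G' (Suc pos'+i) \<and> H (Suc pos+i) = H' (Suc pos'+i)"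
    using Suc.prems by (metis Suc_less_eq add_Suc_shift add_Suc)
  note ih = Suc.IH[OF this]
  show ?case using a ih by (cases st) simp_all
qed

lemma hh_first:
  "i0 \<in> {pos..<pos+n} \<Longrightarrow> F i0 \<Longrightarrow> (\<forall>i\<in>{pos..<i0}. \<not>F i) \<Longrightarrow>
   hh F G H (Some j) pos n = hh F G H None pos n * G i0 (j + (i0 - pos))"
proof (induction n arbitrary: j pos)
  case 0 then show ?case by simp
next
  case (Suc n)
  show ?case
  proof (cases "F pos")
    case True
    then have "i0 = pos" using Suc.prems by (cases "pos < i0") auto
    then show ?thesis using True by (simp add: algebra_simps)
  next
    case False
    then have "i0 \<noteq> pos" using Suc.prems by auto
    then have "i0 \<in> {Suc pos..<Suc (pos+n)}" using Suc.prems by auto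
    moreover have "\<forall>i\<in>{Suc pos..<i0}. \<not>F i" using Suc.prems by auto
    ultimately have ih: "hh F G H (Some (Suc j)) (Suc pos) n = hh F G H None (Suc pos) n * G i0 (Suc j + (i0 - Suc pos))"
      using Suc.IH[of "Suc pos" "Suc j"] Suc.prems(2) by simp
    have "Suc j + (i0 - Suc pos) = j + (i0 - pos)" using \<open>i0 \<in> {Suc pos..<Suc (pos+n)}\<close> by auto
    then have ih': "hh F G H (Some (Suc j)) (Suc pos) n = hh F G H None (Suc pos) n * G i0 (j + (i0 - pos))"
      using ih by metis
    show ?thesis using False by (simp only: hh.simps if_False option.map ih') (simp add: algebra_simps)
  qed
qed

lemma hh_someB:
  fixes T :: "nat set"
  shows "hh (\<lambda>i. i\<in>T) G H (Some j) pos n =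
    (let L = filter (\<lambda>i. i\<in>T) [pos..<pos+n] in
     (\<Prod>c<length L. G (L!c) (if c=0 then j + L!0 - pos else L!c - L!(c-1))))
    * (\<Prod>i\<in>{pos..<pos+n} - T. H i)"
proof (induction n arbitrary: j pos)
  case 0 then show ?case by simp
next
  case (Suc n)
  have up: "[pos..<pos+Suc n] = pos # [Suc pos..<Suc (pos+n)]" by (simp add: upt_conv_Cons del: upt_Suc)
  define L' where "L' = filter (\<lambda>i. i\<in>T) [Suc pos..<Suc (pos+n)]"
  show ?case
  proof (cases "pos \<in> T")
    case True
    have L: "filter (\<lambda>i. i\<in>T) [pos..<pos+Suc n] = pos # L'" using True up L'_def by (simp del: upt_Suc)
    have Hs: "{pos..<pos+Suc n} - T = {Suc pos..<Suc (pos+n)} - T" using True by (auto simp: Suc_le_eq order_le_less)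
    have ih: "hh (\<lambda>i. i\<in>T) G H (Some 1) (Suc pos) n =
       (\<Prod>c<length L'. G (L'!c) (if c=0 then 1 + L'!0 - Suc pos else L'!c - L'!(c-1))) * (\<Prod>i\<in>{Suc pos..<Suc (pos+n)} - T. H i)"
      using Suc.IH[of 1 "Suc pos"] unfolding L'_def by (simp add: Let_def del: upt_Suc)
    have e: "(\<Prod>c<length (pos#L'). G ((pos#L')!c) (if c=0 then j + (pos#L')!0 - pos else (pos#L')!c - (pos#L')!(c-1)))
       = G pos j * (\<Prod>c<length L'. G (L'!c) (if c=0 then 1 + L'!0 - Suc pos else L'!c - L'!(c-1)))"
      by (simp add: prod.lessThan_Suc_shift del: prod.lessThan_Suc, rule arg_cong[where f="\<lambda>x. G pos j * x"], rule prod.cong, auto simp: nth_Cons')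
    show ?thesis using True ih e L Hs by (simp add: Let_def algebra_simps del: upt_Suc)
  next
    case False
    have L: "filter (\<lambda>i. i\<in>T) [pos..<pos+Suc n] = L'" using False up L'_def by (simp del: upt_Suc)
    have Hs: "{pos..<pos+Suc n} - T = insert pos ({Suc pos..<Suc (pos+n)} - T)" using False by auto
    have ih: "hh (\<lambda>i. i\<in>T) G H (Some (Suc j)) (Suc pos) n =
       (\<Prod>c<length L'. G (L'!c) (if c=0 then Suc j + L'!0 - Suc pos else L'!c - L'!(c-1))) * (\<Prod>i\<in>{Suc pos..<Suc (pos+n)} - T. H i)"
      using Suc.IH[of "Suc j" "Suc pos"] unfolding L'_def by (simp add: Let_def del: upt_Suc)
    show ?thesis using False ih L Hs by (simp add: Let_def algebra_simps del: upt_Suc cong: if_cong)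
  qed
qed

lemma hh_noneA:
  fixes T :: "nat set"
  shows "hh (\<lambda>i. i\<in>T) G H None pos n =
    (let L = filter (\<lambda>i. i\<in>T) [pos..<pos+n] in
     (\<Prod>c\<in>{1..<length L}. G (L!c) (L!c - L!(c-1))))
    * (\<Prod>i\<in>{pos..<pos+n} - T. H i)"
proof (induction n arbitrary: pos)
  case 0 then show ?case by simp
next
  case (Suc n)
  have up: "[pos..<pos+Suc n] = pos # [Suc pos..<Suc (pos+n)]" by (simp add: upt_conv_Cons del: upt_Suc)
  define L' where "L' = filter (\<lambda>i. i\<in>T) [Suc pos..<Suc (pos+n)]"
  show ?case
  proof (cases "pos \<in> T")
    case True
    have L: "filter (\<lambda>i. i\<in>T) [pos..<pos+Suc n] = pos # L'" using True up L'_def by (simp del: upt_Suc)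
    have Hs: "{pos..<pos+Suc n} - T = {Suc pos..<Suc (pos+n)} - T" using True by (auto simp: Suc_le_eq order_le_less)
    have ih: "hh (\<lambda>i. i\<in>T) G H (Some 1) (Suc pos) n =
       (\<Prod>c<length L'. G (L'!c) (if c=0 then 1 + L'!0 - Suc pos else L'!c - L'!(c-1))) * (\<Prod>i\<in>{Suc pos..<Suc (pos+n)} - T. H i)"
      using hh_someB[of T G H 1 "Suc pos" n] unfolding L'_def by (simp add: Let_def del: upt_Suc)
    have e: "(\<Prod>c\<in>{1..<length (pos#L')}. G ((pos#L')!c) ((pos#L')!c - (pos#L')!(c-1)))
       = (\<Prod>c<length L'. G (L'!c) (if c=0 then 1 + L'!0 - Suc pos else L'!c - L'!(c-1)))"
    proof -
      have "(\<Prod>c\<in>{1..<length (pos#L')}. G ((pos#L')!c) ((pos#L')!c - (pos#L')!(c-1)))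
          = (\<Prod>c\<in>{0..<length L'}. G ((pos#L')!(Suc c)) ((pos#L')!(Suc c) - (pos#L')!c))"
        using prod.atLeast_Suc_lessThan_Suc_shift[of "\<lambda>c. G ((pos#L')!c) ((pos#L')!c - (pos#L')!(c-1))" 0 "length L'"]
        by simp
      also have "\<dots> = (\<Prod>c<length L'. G (L'!c) (if c=0 then 1 + L'!0 - Suc pos else L'!c - L'!(c-1)))"
        by (simp add: atLeast0LessThan) (rule prod.cong, auto simp: nth_Cons')
      finally show ?thesis .
    qed
    show ?thesis using True ih e L Hs by (simp add: Let_def algebra_simps del: upt_Suc)
  next
    case False
    have L: "filter (\<lambda>i. i\<in>T) [pos..<pos+Suc n] = L'" using False up L'_def by (simp del: upt_Suc)
    have Hs: "{pos..<pos+Suc n} - T = insert pos ({Suc pos..<Suc (pos+n)} - T)" using False by auto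
    show ?thesis using False Suc.IH[of "Suc pos"] L Hs L'_def by (simp add: Let_def algebra_simps del: upt_Suc)
  qed
qed

lemma sorted_filter_upt:
  fixes T :: "nat set"
  assumes "T \<subseteq> {pos..<pos+n}"
  shows "sorted_list_of_set T = filter (\<lambda>i. i\<in>T) [pos..<pos+n]"
proof -
  have f: "finite T" using assms finite_subset by blast
  let ?l = "filter (\<lambda>i. i\<in>T) [pos..<pos+n]"
  have "sorted_wrt (<) ?l" by (simp add: sorted_wrt_filter del: upt_Suc)
  moreover have "set ?l = T" using assms by auto
  moreover have "length ?l = card T" using distinct_card[of ?l] calculation by simp
  ultimately show ?thesis using sorted_list_of_set_unique[OF f] by blast
qed

lemma terminals_sub: "terminals S \<subseteq> {1..<1+card S}"
  unfolding terminals_def terminal_def by auto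

lemma monomial_hh:
  "monomial a d S = hh (\<lambda>i. i \<in> terminals S) (\<lambda>i g. a (d (chord_lab S i)) g) (\<lambda>i. a (d (chord_lab S i)) 0) None 1 (card S)"
proof -
  have e: "{1..card S} = {1..<1+card S}" by auto
  show ?thesis
    unfolding monomial_def Let_def hh_noneA sorted_filter_upt[OF terminals_sub] e ..
qed




definition valid :: "chord set \<Rightarrow> bool" where
  "valid S \<longleftrightarrow> finite S \<and> (\<forall>c\<in>S. fst c < snd c)
     \<and> (\<forall>c\<in>S. \<forall>c'\<in>S. c \<noteq> c' \<longrightarrow> {fst c, snd c} \<inter> {fst c', snd c'} = {})"

lemma valid_cd: "is_cd C \<Longrightarrow> valid C"
  unfolding is_cd_def valid_def by blast

lemma valid_subset: "valid S \<Longrightarrow> T \<subseteq> S \<Longrightarrow> valid T"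
  unfolding valid_def by (meson finite_subset subsetD)

lemma valid_finite: "valid S \<Longrightarrow> finite S" unfolding valid_def by blast

lemma finite_ends: "finite S \<Longrightarrow> finite (ends S)" unfolding ends_def by simp

lemma ends_mono: "S \<subseteq> T \<Longrightarrow> ends S \<subseteq> ends T" unfolding ends_def by auto

lemma valid_same_end:
  assumes "valid S" "c \<in> S" "c' \<in> S" "e \<in> {fst c, snd c}" "e \<in> {fst c', snd c'}"
  shows "c = c'"
  using assms unfolding valid_def by blast

lemma root_char:
  assumes "valid S" "c \<in> S" "fst c = Min (ends S)"
  shows "root S = c"
  unfolding root_def
proof (rule the_equality)
  show "c \<in> S \<and> fst c = Min (ends S)" using assms by simp
next
  fix c' assume "c' \<in> S \<and> fst c' = Min (ends S)"
  then show "c' = c" using valid_same_end[OF assms(1) _ assms(2), of c' "fst c"] assms(3) by auto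
qed

lemma root_in:
  assumes "valid S" "S \<noteq> {}"
  shows "root S \<in> S" "fst (root S) = Min (ends S)"
proof -
  have fin: "finite (ends S)" using assms valid_finite finite_ends by blast
  have ne: "ends S \<noteq> {}" using assms(2) unfolding ends_def by auto
  have m: "Min (ends S) \<in> ends S" using Min_in[OF fin ne] .
  have "\<exists>c\<in>S. fst c = Min (ends S)"
  proof -
    from m obtain c where c: "c \<in> S" "Min (ends S) = fst c \<or> Min (ends S) = snd c"
      unfolding ends_def by auto
    show ?thesis
    proof (cases "Min (ends S) = fst c")
      case True then show ?thesis using c by auto
    next
      case False
      then have "Min (ends S) = snd c" using c by auto
      moreover have "fst c < snd c" using assms(1) c unfolding valid_def by auto
      moreover have "fst c \<in> ends S" using c unfolding ends_def by auto
      ultimately show ?thesis using Min_le[OF fin] by fastforce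
    qed
  qed
  then obtain c where "c \<in> S" "fst c = Min (ends S)" by blast
  then show "root S \<in> S" "fst (root S) = Min (ends S)" using root_char[OF assms(1)] by auto
qed

subsection \<open>crossing and components\<close>

lemma crosses_sym: "crosses c c' = crosses c' c"
  unfolding crosses_def by auto

lemma crosses_irrefl: "\<not> crosses c c"
  unfolding crosses_def by auto

lemma sym_cross_rel: "sym (cross_rel S)"
  unfolding sym_def cross_rel_def using crosses_sym by auto

lemma rtr_sym: "(x,y) \<in> (cross_rel S)\<^sup>* \<Longrightarrow> (y,x) \<in> (cross_rel S)\<^sup>*"
  using sym_rtrancl[OF sym_cross_rel] unfolding sym_def by blast

lemma rtr_in: "(x,y) \<in> (cross_rel S)\<^sup>* \<Longrightarrow> x \<in> S \<Longrightarrow> y \<in> S"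
  by (induction rule: rtrancl_induct) (auto simp: cross_rel_def)

lemma comp_sub: "comp S c \<subseteq> S" unfolding comp_def by auto

lemma comp_self: "c \<in> S \<Longrightarrow> c \<in> comp S c" unfolding comp_def by auto

lemma comp_eq: "c' \<in> comp S c \<Longrightarrow> comp S c' = comp S c"
proof -
  assume "c' \<in> comp S c"
  then have a: "(c,c') \<in> (cross_rel S)\<^sup>*" unfolding comp_def by auto
  then have b: "(c',c) \<in> (cross_rel S)\<^sup>*" by (rule rtr_sym)
  show ?thesis
  proof
    show "comp S c' \<subseteq> comp S c" unfolding comp_def using a rtrancl_trans[OF a] by auto
    show "comp S c \<subseteq> comp S c'" unfolding comp_def using b rtrancl_trans[OF b] by auto
  qed
qed

lemma comps_disj: "K1 \<in> components S \<Longrightarrow> K2 \<in> components S \<Longrightarrow> K1 \<noteq> K2 \<Longrightarrow> K1 \<inter> K2 = {}"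
proof -
  assume a: "K1 \<in> components S" "K2 \<in> components S" "K1 \<noteq> K2"
  show "K1 \<inter> K2 = {}"
  proof (rule ccontr)
    assume "K1 \<inter> K2 \<noteq> {}"
    then obtain x where x: "x \<in> K1" "x \<in> K2" by blast
    obtain c1 c2 where "K1 = comp S c1" "K2 = comp S c2" using a unfolding components_def by blast
    then show False using comp_eq[of x S c1] comp_eq[of x S c2] x a(3) by simp
  qed
qed

lemma comps_nonempty: "K \<in> components S \<Longrightarrow> K \<noteq> {}"
  unfolding components_def using comp_self by blast

lemma comps_sub: "K \<in> components S \<Longrightarrow> K \<subseteq> S"
  unfolding components_def using comp_sub by blast

lemma Union_comps: "\<Union> (components S) = S"
proof
  show "\<Union> (components S) \<subseteq> S" using comps_sub by blast
  show "S \<subseteq> \<Union> (components S)"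
  proof
    fix x assume "x \<in> S"
    then have "x \<in> comp S x" "comp S x \<in> components S" using comp_self unfolding components_def by auto
    then show "x \<in> \<Union> (components S)" by blast
  qed
qed

lemma finite_comps: "finite S \<Longrightarrow> finite (components S)"
  unfolding components_def by simp

lemma comp_closed:
  assumes "K \<in> components S" "x \<in> K" "y \<in> S" "crosses x y"
  shows "y \<in> K"
proof -
  obtain k where k: "k \<in> S" "K = comp S k" using assms(1) unfolding components_def by blast
  have "(k,x) \<in> (cross_rel S)\<^sup>*" using assms(2) k unfolding comp_def by auto
  moreover have "(x,y) \<in> cross_rel S" using assms(2,3,4) comps_sub[OF assms(1)] unfolding cross_rel_def by auto
  ultimately have "(k,y) \<in> (cross_rel S)\<^sup>*" by auto
  then show ?thesis using k assms(3) unfolding comp_def by auto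
qed

lemma comps_nocross:
  assumes "K1 \<in> components S" "K2 \<in> components S" "K1 \<noteq> K2" "x \<in> K1" "y \<in> K2"
  shows "\<not> crosses x y"
proof
  assume c: "crosses x y"
  have "y \<in> S" using comps_sub[OF assms(2)] assms(5) by blast
  then have "y \<in> K1" using comp_closed[OF assms(1) assms(4) _ c] by blast
  then show False using comps_disj[OF assms(1,2,3)] assms(5) by blast
qed

lemma comp_minus:
  assumes K: "K \<in> components S" and c: "c \<in> S - K"
  shows "comp (S - K) c = comp S c"
proof
  have "cross_rel (S - K) \<subseteq> cross_rel S" unfolding cross_rel_def by auto
  then show "comp (S - K) c \<subseteq> comp S c" unfolding comp_def using rtrancl_mono by blast
next
  show "comp S c \<subseteq> comp (S - K) c"
  proof
    fix y assume "y \<in> comp S c"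
    then have y: "(c,y) \<in> (cross_rel S)\<^sup>*" "y \<in> S" unfolding comp_def by auto
    have "y \<notin> K \<and> (c,y) \<in> (cross_rel (S-K))\<^sup>*"
      using y(1)
    proof (induction rule: rtrancl_induct)
      case base then show ?case using c by auto
    next
      case (step y z)
      have z: "z \<in> S" "y \<in> S" "crosses y z" using step.hyps(2) unfolding cross_rel_def by auto
      have "z \<notin> K"
      proof
        assume "z \<in> K"
        then have "y \<in> K" using comp_closed[OF K \<open>z\<in>K\<close> z(2)] z(3) crosses_sym by blast
        then show False using step.IH by blast
      qed
      then have "(y,z) \<in> cross_rel (S-K)" using z step.IH unfolding cross_rel_def by auto
      then show ?case using step.IH \<open>z\<notin>K\<close> by auto
    qed
    then show "y \<in> comp (S - K) c" using y unfolding comp_def by auto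
  qed
qed

lemma components_minus:
  assumes K: "K \<in> components S"
  shows "components (S - K) = components S - {K}"
proof -
  have "components (S - K) = comp S ` (S - K)"
    unfolding components_def using comp_minus[OF K] by (auto simp: image_iff)
  also have "\<dots> = components S - {K}"
  proof
    show "comp S ` (S - K) \<subseteq> components S - {K}"
      unfolding components_def using comp_self by auto
  next
    show "components S - {K} \<subseteq> comp S ` (S - K)"
    proof
      fix K' assume a: "K' \<in> components S - {K}"
      then obtain c where c: "c \<in> S" "K' = comp S c" unfolding components_def by auto
      have "c \<notin> K"
      proof
        assume "c \<in> K"
        then obtain k where "k \<in> S" "K = comp S k" using K unfolding components_def by auto
        then have "comp S c = K" using comp_eq \<open>c\<in>K\<close> by auto
        then show False using a c by auto
      qed
      then show "K' \<in> comp S ` (S - K)" using c by auto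
    qed
  qed
  finally show ?thesis .
qed

lemma ends_ne: "K \<noteq> {} \<Longrightarrow> ends K \<noteq> {}" unfolding ends_def by auto

lemma min_end_in: "finite K \<Longrightarrow> K \<noteq> {} \<Longrightarrow> min_end K \<in> ends K"
  unfolding min_end_def by (rule Min_in[OF finite_ends ends_ne])

lemma inj_min_end:
  assumes "valid S"
  shows "inj_on min_end (components S)"
proof (rule inj_onI)
  fix K1 K2 assume a: "K1 \<in> components S" "K2 \<in> components S" "min_end K1 = min_end K2"
  have s1: "K1 \<subseteq> S" and s2: "K2 \<subseteq> S" using a comps_sub by auto
  have fS: "finite S" using valid_finite[OF assms] .
  have f: "finite K1" "finite K2" using s1 s2 fS finite_subset by auto
  obtain c1 where c1: "c1 \<in> K1" "min_end K1 \<in> {fst c1, snd c1}"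
    using min_end_in[OF f(1) comps_nonempty[OF a(1)]] unfolding ends_def by auto
  obtain c2 where c2: "c2 \<in> K2" "min_end K2 \<in> {fst c2, snd c2}"
    using min_end_in[OF f(2) comps_nonempty[OF a(2)]] unfolding ends_def by auto
  have "c1 \<in> S" "c2 \<in> S" using c1 c2 s1 s2 by auto
  then have "c1 = c2" using valid_same_end[OF assms, of c1 c2 "min_end K1"] c1(2) c2(2) a(3) by simp
  then have "K1 \<inter> K2 \<noteq> {}" using c1 c2 by auto
  then show "K1 = K2" using comps_disj[OF a(1) a(2)] by auto
qed

context linorder begin

lemma skl_props:
  assumes "inj_on f A" "finite A"
  shows "set (sorted_key_list_of_set f A) = A" "sorted_wrt (<) (map f (sorted_key_list_of_set f A))"
    "distinct (sorted_key_list_of_set f A)"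
proof -
  interpret folding_insort_key "(\<le>)" "(<)" A f by unfold_locales (rule assms(1))
  show "set (sorted_key_list_of_set f A) = A" using assms by simp
  show "sorted_wrt (<) (map f (sorted_key_list_of_set f A))" by simp
  show "distinct (sorted_key_list_of_set f A)"
    using distinct_sorted_key_list_of_set[of A] distinct_map by blast
qed

lemma skl_unique:
  assumes "inj_on f A" "finite A" "sorted_wrt (<) (map f l)" "set l = A"
  shows "sorted_key_list_of_set f A = l"
proof -
  interpret folding_insort_key "(\<le>)" "(<)" A f by unfold_locales (rule assms(1))
  have "distinct (map f l)" using assms(3) strict_sorted_iff by blast
  then have "length l = card A" using assms(4) distinct_card distinct_map by metis
  then show ?thesis using sorted_key_list_of_set_unique[of A l] assms by simp
qed

end

lemma comps_sorted_props:
  assumes "valid S"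
  shows "set (comps_sorted S) = components S" "distinct (comps_sorted S)"
    "sorted_wrt (<) (map min_end (comps_sorted S))"
  unfolding comps_sorted_def
  using skl_props[OF inj_min_end[OF assms] finite_comps[OF valid_finite[OF assms]]] by auto

lemma card_comp_le:
  assumes "valid S" "S \<noteq> {}" "K \<in> components (S - {root S})"
  shows "card K < card S"
proof -
  have "K \<subseteq> S - {root S}" using comps_sub assms(3) by blast
  moreover have "root S \<in> S" using root_in assms by blast
  ultimately have "K \<subset> S" by blast
  then show ?thesis using psubset_card_mono valid_finite[OF assms(1)] by blast
qed

lemma io_fuel:
  "valid S \<Longrightarrow> card S \<le> n \<Longrightarrow> card S \<le> n' \<Longrightarrow> io n S = io n' S"
proof (induction n arbitrary: n' S)
  case 0
  then have "S = {}" using valid_finite by auto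
  then show ?case by (cases n') auto
next
  case (Suc n)
  show ?case
  proof (cases "S = {}")
    case True then show ?thesis by (cases n') auto
  next
    case False
    then have "card S > 0" using valid_finite[OF Suc.prems(1)] by (simp add: card_gt_0_iff)
    then obtain m where m: "n' = Suc m" using Suc.prems(3) by (cases n') auto
    have vR: "valid (S - {root S})" using valid_subset Suc.prems(1) by blast
    have eq: "map (io n) (comps_sorted (S - {root S})) = map (io m) (comps_sorted (S - {root S}))"
    proof (rule map_cong[OF refl])
      fix K assume "K \<in> set (comps_sorted (S - {root S}))"
      then have K: "K \<in> components (S - {root S})" using comps_sorted_props[OF vR] by simp
      have "card K < card S" using card_comp_le[OF Suc.prems(1) False K] .
      moreover have "valid K" using valid_subset[OF vR comps_sub[OF K]] .
      moreover have "card K \<le> n" "card K \<le> m" using \<open>card K < card S\<close> Suc.prems(2,3) m by auto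
      ultimately show "io n K = io m K" using Suc.IH[of K m] by blast
    qed
    show ?thesis using m False by (simp only: io.simps(2) eq if_False simp_thms)
  qed
qed

lemma io_set_len:
  "valid S \<Longrightarrow> card S \<le> n \<Longrightarrow> set (io n S) = S \<and> length (io n S) = card S"
proof (induction n arbitrary: S)
  case 0
  then have "S = {}" using valid_finite by auto
  then show ?case by auto
next
  case (Suc n)
  show ?case
  proof (cases "S = {}")
    case True then show ?thesis by auto
  next
    case False
    define R where "R = S - {root S}"
    have r: "root S \<in> S" using root_in[OF Suc.prems(1) False] by blast
    have vR: "valid R" using valid_subset Suc.prems(1) R_def by blast
    have fR: "finite R" using valid_finite[OF vR] .
    have ih: "\<And>K. K \<in> set (comps_sorted R) \<Longrightarrow> set (io n K) = K \<and> length (io n K) = card K"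
    proof -
      fix K assume "K \<in> set (comps_sorted R)"
      then have K: "K \<in> components R" using comps_sorted_props[OF vR] by simp
      have "card K < card S" using card_comp_le[OF Suc.prems(1) False] K R_def by blast
      moreover have "valid K" using valid_subset[OF vR comps_sub[OF K]] .
      moreover have "card K \<le> n" using \<open>card K < card S\<close> Suc.prems(2) by auto
      ultimately show "set (io n K) = K \<and> length (io n K) = card K" using Suc.IH[of K] by blast
    qed
    have "set (concat (map (io n) (comps_sorted R))) = \<Union> (set (comps_sorted R))"
      using ih by auto
    also have "\<dots> = R" using comps_sorted_props[OF vR] Union_comps by simp
    finally have s: "set (concat (map (io n) (comps_sorted R))) = R" .
    have "length (concat (map (io n) (comps_sorted R))) = sum_list (map card (comps_sorted R))"
      by (simp add: length_concat o_def ih cong: map_cong)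
    also have "\<dots> = sum card (components R)"
      using sum_list_distinct_conv_sum_set[OF comps_sorted_props(2)[OF vR]] comps_sorted_props(1)[OF vR] by simp
    also have "\<dots> = card (\<Union>(components R))"
    proof (rule card_Union_disjoint[symmetric])
      show "pairwise disjnt (components R)" unfolding pairwise_def disjnt_def using comps_disj by blast
      show "\<And>A. A \<in> components R \<Longrightarrow> finite A" using comps_sub fR finite_subset by blast
    qed
    also have "\<dots> = card R" using Union_comps by simp
    finally have l: "length (concat (map (io n) (comps_sorted R))) = card R" .
    have "card S = Suc (card R)" using r R_def valid_finite[OF Suc.prems(1)]
      by (metis card_Suc_Diff1)
    then show ?thesis using s l r False R_def by auto
  qed
qed

lemma int_order_props:
  assumes "valid S"
  shows "set (int_order S) = S" "length (int_order S) = card S" "distinct (int_order S)"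
proof -
  show s: "set (int_order S) = S" and l: "length (int_order S) = card S"
    using io_set_len[OF assms, of "card S"] unfolding int_order_def by auto
  show "distinct (int_order S)" using card_distinct s l by metis
qed




definition gmap :: "(nat \<Rightarrow> nat) \<Rightarrow> chord \<Rightarrow> chord" where
  "gmap h c = (h (fst c), h (snd c))"

lemma nmap_gmap: "nmap L = gmap (rank L)"
  unfolding nmap_def gmap_def by (rule ext) simp

lemma ends_in: "c \<in> S \<Longrightarrow> fst c \<in> ends S" "c \<in> S \<Longrightarrow> snd c \<in> ends S"
  unfolding ends_def by auto

lemma ends_in0: "c \<in> S \<Longrightarrow> S \<subseteq> S0 \<Longrightarrow> fst c \<in> ends S0 \<and> snd c \<in> ends S0"
  unfolding ends_def by auto

locale relab =
  fixes S0 :: "chord set" and h :: "nat \<Rightarrow> nat"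
  assumes v: "valid S0" and sm: "strict_mono_on (ends S0) h"
begin

abbreviation "g \<equiv> gmap h"

lemma hless: "x \<in> ends S0 \<Longrightarrow> y \<in> ends S0 \<Longrightarrow> h x < h y \<longleftrightarrow> x < y"
  using strict_mono_on_less[OF sm] by blast

lemma heq: "x \<in> ends S0 \<Longrightarrow> y \<in> ends S0 \<Longrightarrow> h x = h y \<longleftrightarrow> x = y"
  using strict_mono_on_eqD[OF sm] by blast

lemma hle: "x \<in> ends S0 \<Longrightarrow> y \<in> ends S0 \<Longrightarrow> h x \<le> h y \<longleftrightarrow> x \<le> y"
  using strict_mono_on_less_eq[OF sm] by blast

lemma g_inj: "inj_on g S0"
proof (rule inj_onI)
  fix c c' assume a: "c \<in> S0" "c' \<in> S0" "g c = g c'"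
  then have "h (fst c) = h (fst c')" unfolding gmap_def by simp
  then have "fst c = fst c'" using heq ends_in0[of c S0 S0] ends_in0[of c' S0 S0] a by blast
  then show "c = c'" using valid_same_end[OF v a(1) a(2), of "fst c"] by simp
qed

lemma g_cross: "c \<in> S0 \<Longrightarrow> c' \<in> S0 \<Longrightarrow> crosses (g c) (g c') = crosses c c'"
proof -
  assume a: "c \<in> S0" "c' \<in> S0"
  then have e: "fst c \<in> ends S0" "snd c \<in> ends S0" "fst c' \<in> ends S0" "snd c' \<in> ends S0"
    using ends_in0[of c S0 S0] ends_in0[of c' S0 S0] by auto
  show ?thesis unfolding crosses_def gmap_def using hless[OF e(1) e(3)] hless[OF e(3) e(2)] hless[OF e(2) e(4)]
     hless[OF e(3) e(1)] hless[OF e(1) e(4)] hless[OF e(4) e(2)] by simp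
qed

lemma g_ends: "ends (g ` S) = h ` ends S"
  unfolding ends_def gmap_def by (simp add: image_Un image_image)

lemma h_Min: "E \<subseteq> ends S0 \<Longrightarrow> finite E \<Longrightarrow> E \<noteq> {} \<Longrightarrow> Min (h ` E) = h (Min E)"
proof -
  assume a: "E \<subseteq> ends S0" "finite E" "E \<noteq> {}"
  have m: "Min E \<in> E" using Min_in a by blast
  show ?thesis
  proof (rule Min_eqI)
    show "finite (h ` E)" using a by simp
    show "h (Min E) \<in> h ` E" using m by simp
    fix y assume "y \<in> h ` E"
    then obtain x where x: "x \<in> E" "y = h x" by blast
    have "Min E \<le> x" using Min_le a x by blast
    then show "h (Min E) \<le> y" using hle a m x by blast
  qed
qed

lemma g_valid: "S \<subseteq> S0 \<Longrightarrow> valid (g ` S)"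
proof -
  assume S: "S \<subseteq> S0"
  have fin: "finite S" using valid_finite[OF valid_subset[OF v S]] .
  show ?thesis unfolding valid_def
  proof (intro conjI ballI impI)
    show "finite (g ` S)" using fin by simp
  next
    fix c assume "c \<in> g ` S"
    then obtain x where x: "x \<in> S" "c = g x" by blast
    have "fst x < snd x" using v x S unfolding valid_def by blast
    moreover have "fst x \<in> ends S0" "snd x \<in> ends S0" using ends_in0[of x S S0] x S by auto
    ultimately show "fst c < snd c" using hless x unfolding gmap_def by auto
  next
    fix c c' assume a: "c \<in> g ` S" "c' \<in> g ` S" "c \<noteq> c'"
    then obtain x x' where x: "x \<in> S" "c = g x" "x' \<in> S" "c' = g x'" by blast
    have "x \<noteq> x'" using a(3) x(2) x(4) by metis
    then have dj: "{fst x, snd x} \<inter> {fst x', snd x'} = {}" using v x S unfolding valid_def by blast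
    have e: "fst x \<in> ends S0" "snd x \<in> ends S0" "fst x' \<in> ends S0" "snd x' \<in> ends S0"
      using ends_in0[of x S S0] ends_in0[of x' S S0] x S by auto
    show "{fst c, snd c} \<inter> {fst c', snd c'} = {}"
      using dj heq[OF e(1) e(3)] heq[OF e(1) e(4)] heq[OF e(2) e(3)] heq[OF e(2) e(4)]
      unfolding x gmap_def by auto
  qed
qed

lemma g_root: "S \<subseteq> S0 \<Longrightarrow> S \<noteq> {} \<Longrightarrow> root (g ` S) = g (root S)"
proof -
  assume S: "S \<subseteq> S0" "S \<noteq> {}"
  have vS: "valid S" using valid_subset[OF v S(1)] .
  have r: "root S \<in> S" "fst (root S) = Min (ends S)" using root_in[OF vS S(2)] by auto
  have "Min (ends (g ` S)) = h (Min (ends S))"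
    unfolding g_ends by (rule h_Min[OF ends_mono[OF S(1)] finite_ends[OF valid_finite[OF vS]] ends_ne[OF S(2)]])
  then have "fst (g (root S)) = Min (ends (g ` S))" using r unfolding gmap_def by simp
  then show ?thesis using root_char[OF g_valid[OF S(1)]] r(1) by blast
qed

lemma g_rtr1:
  assumes S: "S \<subseteq> S0" and "(c,c') \<in> (cross_rel S)\<^sup>*"
  shows "(g c, g c') \<in> (cross_rel (g ` S))\<^sup>*"
  using assms(2)
proof (induction rule: rtrancl_induct)
  case base then show ?case by simp
next
  case (step y z)
  then have yz: "y \<in> S" "z \<in> S" "crosses y z" unfolding cross_rel_def by auto
  then have "crosses (g y) (g z)" using g_cross[of y z] S by blast
  then have "(g y, g z) \<in> cross_rel (g ` S)" using yz unfolding cross_rel_def by blast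
  then show ?case using step.IH by auto
qed

lemma g_rtr2:
  assumes S: "S \<subseteq> S0" and "(x,y) \<in> (cross_rel (g ` S))\<^sup>*" and c: "c \<in> S" "x = g c"
  shows "\<exists>c'\<in>S. y = g c' \<and> (c,c') \<in> (cross_rel S)\<^sup>*"
  using assms(2)
proof (induction rule: rtrancl_induct)
  case base then show ?case using c by auto
next
  case (step y z)
  obtain c' where c': "c' \<in> S" "y = g c'" "(c,c') \<in> (cross_rel S)\<^sup>*" using step.IH by blast
  have "z \<in> g ` S" "crosses y z" using step.hyps(2) unfolding cross_rel_def by auto
  then obtain cz where cz: "cz \<in> S" "z = g cz" by blast
  have "crosses c' cz" using g_cross[of c' cz] S c'(1,2) cz \<open>crosses y z\<close> by blast
  then have "(c', cz) \<in> cross_rel S" using c' cz unfolding cross_rel_def by auto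
  then have "(c, cz) \<in> (cross_rel S)\<^sup>*" by (rule rtrancl.rtrancl_into_rtrancl[OF c'(3)])
  then show ?case using cz by blast
qed

lemma g_comp: "S \<subseteq> S0 \<Longrightarrow> c \<in> S \<Longrightarrow> comp (g ` S) (g c) = g ` comp S c"
proof -
  assume S: "S \<subseteq> S0" and c: "c \<in> S"
  show ?thesis
  proof
    show "comp (g ` S) (g c) \<subseteq> g ` comp S c"
    proof
      fix y assume "y \<in> comp (g ` S) (g c)"
      then have "(g c, y) \<in> (cross_rel (g ` S))\<^sup>*" unfolding comp_def by auto
      then obtain c' where "c' \<in> S" "y = g c'" "(c,c') \<in> (cross_rel S)\<^sup>*" using g_rtr2[OF S _ c] by blast
      then show "y \<in> g ` comp S c" unfolding comp_def by auto
    qed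
  next
    show "g ` comp S c \<subseteq> comp (g ` S) (g c)"
    proof
      fix y assume "y \<in> g ` comp S c"
      then obtain c' where c': "c' \<in> S" "(c,c') \<in> (cross_rel S)\<^sup>*" "y = g c'" unfolding comp_def by blast
      then show "y \<in> comp (g ` S) (g c)" using g_rtr1[OF S c'(2)] unfolding comp_def by blast
    qed
  qed
qed

lemma g_components: "S \<subseteq> S0 \<Longrightarrow> components (g ` S) = (image g) ` components S"
proof -
  assume S: "S \<subseteq> S0"
  have "comp (g ` S) ` g ` S = (\<lambda>c. comp (g ` S) (g c)) ` S" by (simp add: image_image)
  also have "\<dots> = (\<lambda>c. g ` comp S c) ` S" using g_comp[OF S] by (simp cong: image_cong)
  also have "\<dots> = (image g) ` comp S ` S" by (simp add: image_image)
  finally show ?thesis unfolding components_def .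
qed

lemma g_min_end: "K \<subseteq> S0 \<Longrightarrow> K \<noteq> {} \<Longrightarrow> min_end (g ` K) = h (min_end K)"
  unfolding min_end_def g_ends
  by (rule h_Min[OF ends_mono finite_ends[OF valid_finite[OF valid_subset[OF v]]] ends_ne])

lemma g_comps_sorted: "S \<subseteq> S0 \<Longrightarrow> comps_sorted (g ` S) = map (image g) (comps_sorted S)"
proof -
  assume S: "S \<subseteq> S0"
  have vS: "valid S" using valid_subset[OF v S] .
  have vgS: "valid (g ` S)" using g_valid[OF S] .
  note P = comps_sorted_props[OF vS]
  have sub: "\<And>K. K \<in> set (comps_sorted S) \<Longrightarrow> K \<subseteq> S0 \<and> K \<noteq> {}"
  proof -
    fix K assume "K \<in> set (comps_sorted S)"
    then have K: "K \<in> components S" using P(1) by simp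
    show "K \<subseteq> S0 \<and> K \<noteq> {}" using comps_sub[OF K] comps_nonempty[OF K] S by blast
  qed
  show ?thesis unfolding comps_sorted_def
  proof (rule skl_unique)
    show "inj_on min_end (components (g ` S))" using inj_min_end[OF vgS] .
    show "finite (components (g ` S))" by (rule finite_comps[OF valid_finite[OF vgS]])
    show "set (map ((`) g) (sorted_key_list_of_set min_end (components S))) = components (g ` S)"
      using P(1) g_components[OF S] unfolding comps_sorted_def by simp
    have e1: "map min_end (map ((`) g) (comps_sorted S)) = map (h \<circ> min_end) (comps_sorted S)"
      using sub g_min_end by (simp cong: map_cong)
    have e2: "sorted_wrt (<) (map (h \<circ> min_end) (comps_sorted S))"
    proof -
      have s1: "sorted_wrt (\<lambda>x y. min_end x < min_end y) (comps_sorted S)"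
        using P(3) by (simp add: sorted_wrt_map)
      have s2: "\<And>x y. x \<in> set (comps_sorted S) \<Longrightarrow> y \<in> set (comps_sorted S) \<Longrightarrow>
          min_end x < min_end y \<Longrightarrow> h (min_end x) < h (min_end y)"
      proof -
        fix x y assume xy: "x \<in> set (comps_sorted S)" "y \<in> set (comps_sorted S)" "min_end x < min_end y"
        have fx: "finite x" "finite y"
          using finite_subset[OF conjunct1[OF sub[OF xy(1)]] valid_finite[OF v]]
            finite_subset[OF conjunct1[OF sub[OF xy(2)]] valid_finite[OF v]] by auto
        have "min_end x \<in> ends S0" using min_end_in[OF fx(1)] sub[OF xy(1)] ends_mono[of x S0] by blast
        moreover have "min_end y \<in> ends S0" using min_end_in[OF fx(2)] sub[OF xy(2)] ends_mono[of y S0] by blast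
        ultimately show "h (min_end x) < h (min_end y)" using hless xy(3) by blast
      qed
      have "sorted_wrt (\<lambda>x y. h (min_end x) < h (min_end y)) (comps_sorted S)"
        by (rule sorted_wrt_mono_rel[OF s2 s1])
      then show ?thesis by (simp add: sorted_wrt_map)
    qed
    show "sorted_wrt (<) (map min_end (map ((`) g) (sorted_key_list_of_set min_end (components S))))"
      unfolding comps_sorted_def[symmetric] e1 by (rule e2)
  qed
qed

lemma g_io: "S \<subseteq> S0 \<Longrightarrow> io n (g ` S) = map g (io n S)"
proof (induction n arbitrary: S)
  case 0 then show ?case by simp
next
  case (Suc n)
  show ?case
  proof (cases "S = {}")
    case True then show ?thesis by simp
  next
    case False
    have vS: "valid S" using valid_subset[OF v Suc.prems] .
    have r: "root (g ` S) = g (root S)" using g_root[OF Suc.prems False] .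
    have rin: "root S \<in> S" using root_in[OF vS False] by blast
    have R: "g ` S - {g (root S)} = g ` (S - {root S})"
      using inj_on_image_set_diff[OF g_inj, of S "{root S}"] Suc.prems rin by auto
    have RS: "S - {root S} \<subseteq> S0" using Suc.prems by blast
    have cs: "comps_sorted (g ` (S - {root S})) = map (image g) (comps_sorted (S - {root S}))"
      using g_comps_sorted[OF RS] .
    have ih: "\<And>K. K \<in> set (comps_sorted (S - {root S})) \<Longrightarrow> io n (g ` K) = map g (io n K)"
    proof -
      fix K assume "K \<in> set (comps_sorted (S - {root S}))"
      then have "K \<in> components (S - {root S})" using comps_sorted_props(1)[OF valid_subset[OF vS]] by blast
      then have "K \<subseteq> S0" using comps_sub RS by blast
      then show "io n (g ` K) = map g (io n K)" using Suc.IH by blast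
    qed
    have "concat (map (io n) (map (image g) (comps_sorted (S - {root S}))))
        = concat (map (map g \<circ> io n) (comps_sorted (S - {root S})))"
      using ih by (simp cong: map_cong)
    also have "\<dots> = map g (concat (map (io n) (comps_sorted (S - {root S}))))"
      by (simp add: map_concat)
    finally have e: "concat (map (io n) (comps_sorted (g ` S - {root (g ` S)})))
       = map g (concat (map (io n) (comps_sorted (S - {root S}))))" using r R cs by simp
    have ne: "g ` S \<noteq> {}" using False by simp
    show ?thesis using e r False ne by simp
  qed
qed

lemma g_int_order: "S \<subseteq> S0 \<Longrightarrow> int_order (g ` S) = map g (int_order S)"
proof -
  assume S: "S \<subseteq> S0"
  have "card (g ` S) = card S" using card_image inj_on_subset[OF g_inj S] by blast
  then show ?thesis unfolding int_order_def using g_io[OF S] by simp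
qed

end

lemma rank_sm:
  assumes "finite L"
  shows "strict_mono_on (ends L) (rank L)"
proof (rule strict_mono_onI)
  fix x y assume a: "x \<in> ends L" "y \<in> ends L" "x < y"
  have "y \<in> {e \<in> ends L. e \<le> y}" "y \<notin> {e \<in> ends L. e \<le> x}" using a by auto
  moreover have "{e \<in> ends L. e \<le> x} \<subseteq> {e \<in> ends L. e \<le> y}" using a by auto
  ultimately have "{e \<in> ends L. e \<le> x} \<subset> {e \<in> ends L. e \<le> y}" by blast
  moreover have "finite {e \<in> ends L. e \<le> y}" using finite_ends[OF assms] by simp
  ultimately show "rank L x < rank L y" unfolding rank_def using psubset_card_mono by blast
qed

lemma relab_norm: "valid L \<Longrightarrow> relab L (rank L)"
  unfolding relab_def using rank_sm valid_finite by blast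

lemma norm_int_order:
  assumes "valid L"
  shows "int_order (norm_cd L) = map (nmap L) (int_order L)"
proof -
  interpret relab L "rank L" using relab_norm[OF assms] .
  show ?thesis unfolding norm_cd_def nmap_gmap using g_int_order by blast
qed

lemma norm_card:
  assumes "valid L" shows "card (norm_cd L) = card L"
proof -
  interpret relab L "rank L" using relab_norm[OF assms] .
  show ?thesis unfolding norm_cd_def nmap_gmap using card_image g_inj by blast
qed

lemma norm_inherit:
  assumes "valid L" "c \<in> L" shows "inherit d L (nmap L c) = d c"
proof -
  interpret relab L "rank L" using relab_norm[OF assms(1)] .
  show ?thesis unfolding inherit_def nmap_gmap using inv_into_f_f[OF g_inj assms(2)] by simp
qed

lemma norm_cross:
  assumes "valid L" "c \<in> L" "c' \<in> L" shows "crosses (nmap L c) (nmap L c') = crosses c c'"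
proof -
  interpret relab L "rank L" using relab_norm[OF assms(1)] .
  show ?thesis unfolding nmap_gmap using g_cross assms by blast
qed




definition lterm :: "chord list \<Rightarrow> nat \<Rightarrow> bool" where
  "lterm xs i \<longleftrightarrow> i \<in> {1..length xs} \<and> (\<forall>j\<in>{i<..length xs}. \<not> crosses (xs!(i-1)) (xs!(j-1)))"

lemma terminal_lterm: "length (int_order S) = card S \<Longrightarrow> terminal S i = lterm (int_order S) i"
  unfolding terminal_def lterm_def chord_lab_def by simp

lemma lterm_Cons: "1 \<le> i \<Longrightarrow> lterm (x#xs) (Suc i) = lterm xs i"
proof -
  assume i: "1 \<le> i"
  have A: "(\<forall>j\<in>{Suc i<..Suc (length xs)}. \<not> crosses ((x#xs)!(Suc i-1)) ((x#xs)!(j-1)))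
        = (\<forall>j\<in>{i<..length xs}. \<not> crosses (xs!(i-1)) (xs!(j-1)))"
  proof
    assume h: "\<forall>j\<in>{Suc i<..Suc (length xs)}. \<not> crosses ((x#xs)!(Suc i-1)) ((x#xs)!(j-1))"
    show "\<forall>j\<in>{i<..length xs}. \<not> crosses (xs!(i-1)) (xs!(j-1))"
    proof
      fix j assume j: "j \<in> {i<..length xs}"
      then have "Suc j \<in> {Suc i<..Suc (length xs)}" by auto
      then have "\<not> crosses ((x#xs)!(Suc i-1)) ((x#xs)!(Suc j-1))" using h by blast
      then show "\<not> crosses (xs!(i-1)) (xs!(j-1))" using i j by (simp add: nth_Cons')
    qed
  next
    assume h: "\<forall>j\<in>{i<..length xs}. \<not> crosses (xs!(i-1)) (xs!(j-1))"
    show "\<forall>j\<in>{Suc i<..Suc (length xs)}. \<not> crosses ((x#xs)!(Suc i-1)) ((x#xs)!(j-1))"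
    proof
      fix j assume j: "j \<in> {Suc i<..Suc (length xs)}"
      then obtain j' where j': "j = Suc j'" "j' \<in> {i<..length xs}" by (cases j) auto
      then show "\<not> crosses ((x#xs)!(Suc i-1)) ((x#xs)!(j-1))" using h i by (simp add: nth_Cons')
    qed
  qed
  show ?thesis unfolding lterm_def using A i by auto
qed

lemma lterm_Cons1: "lterm (x#xs) 1 = (\<forall>y\<in>set xs. \<not> crosses x y)"
proof -
  have "(\<forall>j\<in>{1<..Suc (length xs)}. \<not> crosses x ((x#xs)!(j-1))) = (\<forall>y\<in>set xs. \<not> crosses x y)"
  proof
    assume h: "\<forall>j\<in>{1<..Suc (length xs)}. \<not> crosses x ((x#xs)!(j-1))"
    show "\<forall>y\<in>set xs. \<not> crosses x y"
    proof
      fix y assume "y \<in> set xs"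
      then obtain k where k: "k < length xs" "xs!k = y" by (auto simp: in_set_conv_nth)
      then have "Suc (Suc k) \<in> {1<..Suc (length xs)}" by auto
      then show "\<not> crosses x y" using h k by fastforce
    qed
  next
    assume h: "\<forall>y\<in>set xs. \<not> crosses x y"
    show "\<forall>j\<in>{1<..Suc (length xs)}. \<not> crosses x ((x#xs)!(j-1))"
    proof
      fix j assume j: "j \<in> {1<..Suc (length xs)}"
      then obtain k where "j = Suc (Suc k)" "k < length xs" by (cases j; cases "j - 1") auto
      then show "\<not> crosses x ((x#xs)!(j-1))" using h by simp
    qed
  qed
  then show ?thesis unfolding lterm_def by simp
qed

lemma lterm_app1:
  assumes nc: "\<forall>x\<in>set xs. \<forall>y\<in>set ys. \<not> crosses x y" and i: "1 \<le> i" "i \<le> length xs"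
  shows "lterm (xs @ ys) i = lterm xs i"
proof -
  have "(\<forall>j\<in>{i<..length (xs@ys)}. \<not> crosses ((xs@ys)!(i-1)) ((xs@ys)!(j-1)))
      = (\<forall>j\<in>{i<..length xs}. \<not> crosses (xs!(i-1)) (xs!(j-1)))"
  proof
    assume h: "\<forall>j\<in>{i<..length (xs@ys)}. \<not> crosses ((xs@ys)!(i-1)) ((xs@ys)!(j-1))"
    show "\<forall>j\<in>{i<..length xs}. \<not> crosses (xs!(i-1)) (xs!(j-1))"
    proof
      fix j assume j: "j \<in> {i<..length xs}"
      then have "j \<in> {i<..length (xs@ys)}" by auto
      then have "\<not> crosses ((xs@ys)!(i-1)) ((xs@ys)!(j-1))" using h by blast
      moreover have "(xs@ys)!(i-1) = xs!(i-1)" "(xs@ys)!(j-1) = xs!(j-1)" using i j by (auto simp: nth_append)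
      ultimately show "\<not> crosses (xs!(i-1)) (xs!(j-1))" by simp
    qed
  next
    assume h: "\<forall>j\<in>{i<..length xs}. \<not> crosses (xs!(i-1)) (xs!(j-1))"
    show "\<forall>j\<in>{i<..length (xs@ys)}. \<not> crosses ((xs@ys)!(i-1)) ((xs@ys)!(j-1))"
    proof
      fix j assume j: "j \<in> {i<..length (xs@ys)}"
      show "\<not> crosses ((xs@ys)!(i-1)) ((xs@ys)!(j-1))"
      proof (cases "j \<le> length xs")
        case True
        then have "(xs@ys)!(i-1) = xs!(i-1)" "(xs@ys)!(j-1) = xs!(j-1)" using i j by (auto simp: nth_append)
        moreover have "j \<in> {i<..length xs}" using True j by auto
        ultimately show ?thesis using h by simp
      next
        case False
        then have "(xs@ys)!(j-1) \<in> set ys" using j by (auto simp: nth_append)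
        moreover have "(xs@ys)!(i-1) \<in> set xs" using i by (auto simp: nth_append)
        ultimately show ?thesis using nc by blast
      qed
    qed
  qed
  then show ?thesis unfolding lterm_def using i by auto
qed

lemma lterm_app2:
  assumes i: "1 \<le> i"
  shows "lterm (xs @ ys) (length xs + i) = lterm ys i"
proof -
  have "(\<forall>j\<in>{length xs + i<..length (xs@ys)}. \<not> crosses ((xs@ys)!(length xs + i-1)) ((xs@ys)!(j-1)))
      = (\<forall>j\<in>{i<..length ys}. \<not> crosses (ys!(i-1)) (ys!(j-1)))"
  proof
    assume h: "\<forall>j\<in>{length xs + i<..length (xs@ys)}. \<not> crosses ((xs@ys)!(length xs + i-1)) ((xs@ys)!(j-1))"
    show "\<forall>j\<in>{i<..length ys}. \<not> crosses (ys!(i-1)) (ys!(j-1))"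
    proof
      fix j assume j: "j \<in> {i<..length ys}"
      then have "length xs + j \<in> {length xs + i<..length (xs@ys)}" by auto
      then have "\<not> crosses ((xs@ys)!(length xs + i-1)) ((xs@ys)!(length xs + j-1))" using h by blast
      moreover have "length xs + i - 1 = length xs + (i-1)" "length xs + j - 1 = length xs + (j-1)"
        using i j by auto
      moreover have "(xs@ys)!(length xs + i-1) = ys!(i-1)" "(xs@ys)!(length xs + j-1) = ys!(j-1)"
        using calculation(2,3) by (simp_all only: nth_append_length_plus)
      ultimately show "\<not> crosses (ys!(i-1)) (ys!(j-1))" by simp
    qed
  next
    assume h: "\<forall>j\<in>{i<..length ys}. \<not> crosses (ys!(i-1)) (ys!(j-1))"
    show "\<forall>j\<in>{length xs + i<..length (xs@ys)}. \<not> crosses ((xs@ys)!(length xs + i-1)) ((xs@ys)!(j-1))"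
    proof
      fix j assume j: "j \<in> {length xs + i<..length (xs@ys)}"
      define j' where "j' = j - length xs"
      have j': "j = length xs + j'" "j' \<in> {i<..length ys}" using j unfolding j'_def by auto
      have "length xs + i - 1 = length xs + (i-1)" "j - 1 = length xs + (j'-1)"
        using i j' by auto
      then have "(xs@ys)!(length xs + i-1) = ys!(i-1)" "(xs@ys)!(j-1) = ys!(j'-1)"
        by (simp_all only: nth_append_length_plus)
      then show "\<not> crosses ((xs@ys)!(length xs + i-1)) ((xs@ys)!(j-1))" using h j' by simp
    qed
  qed
  then show ?thesis unfolding lterm_def using i by auto
qed

lemma lterm_last: "xs \<noteq> [] \<Longrightarrow> lterm xs (length xs)"
  unfolding lterm_def by (cases xs) auto

lemma lterm_map:
  assumes "\<forall>x\<in>set xs. \<forall>y\<in>set xs. crosses (f x) (f y) = crosses x y"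
  shows "lterm (map f xs) i = lterm xs i"
proof -
  have "\<And>j. i \<in> {1..length xs} \<Longrightarrow> j \<in> {i<..length xs} \<Longrightarrow>
      crosses (map f xs!(i-1)) (map f xs!(j-1)) = crosses (xs!(i-1)) (xs!(j-1))"
  proof -
    fix j assume "i \<in> {1..length xs}" "j \<in> {i<..length xs}"
    then have "i - 1 < length xs" "j - 1 < length xs" by auto
    then show "crosses (map f xs!(i-1)) (map f xs!(j-1)) = crosses (xs!(i-1)) (xs!(j-1))"
      using assms by simp
  qed
  then show ?thesis unfolding lterm_def by auto
qed




lemma conn_path:
  assumes "(r, y) \<in> (cross_rel C)\<^sup>*"
  shows "y = r \<or> (\<exists>x. crosses r x \<and> x \<in> C - {r} \<and> (x,y) \<in> (cross_rel (C - {r}))\<^sup>*)"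
  using assms
proof (induction rule: rtrancl_induct)
  case base then show ?case by simp
next
  case (step y z)
  have z: "z \<in> C" "y \<in> C" "crosses y z" using step.hyps(2) unfolding cross_rel_def by auto
  show ?case
  proof (cases "z = r")
    case True then show ?thesis by simp
  next
    case False
    then have zR: "z \<in> C - {r}" using z by auto
    from step.IH show ?thesis
    proof
      assume "y = r"
      then have "crosses r z" using z by simp
      moreover have "(z,z) \<in> (cross_rel (C - {r}))\<^sup>*" by simp
      ultimately show ?thesis using zR by blast
    next
      assume "\<exists>x. crosses r x \<and> x \<in> C - {r} \<and> (x,y) \<in> (cross_rel (C - {r}))\<^sup>*"
      then obtain x where x: "crosses r x" "x \<in> C - {r}" "(x,y) \<in> (cross_rel (C - {r}))\<^sup>*" by blast
      have "y \<in> C - {r}" using rtr_in[OF x(3) x(2)] .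
      then have "(y,z) \<in> cross_rel (C - {r})" using zR z unfolding cross_rel_def by auto
      then have "(x,z) \<in> (cross_rel (C - {r}))\<^sup>*" by (rule rtrancl.rtrancl_into_rtrancl[OF x(3)])
      then show ?thesis using x by blast
    qed
  qed
qed

locale rsd =
  fixes C :: "chord set"
  assumes cd: "is_cd C" and conn: "connected_cd C" and two: "card C \<ge> 2"
begin

abbreviation "r \<equiv> root C"
abbreviation "R \<equiv> C - {root C}"
abbreviation "K \<equiv> first_comp C"
abbreviation "L \<equiv> C - first_comp C"
abbreviation "Ks \<equiv> tl (comps_sorted (C - {root C}))"
abbreviation "P \<equiv> io (card C - 1) (first_comp C)"
abbreviation "Q \<equiv> concat (map (io (card C - 1)) (tl (comps_sorted (C - {root C}))))"

lemma vC: "valid C" using valid_cd[OF cd] .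
lemma fC: "finite C" using valid_finite[OF vC] .
lemma Cne: "C \<noteq> {}" using two by auto
lemma r_in: "r \<in> C" "fst r = Min (ends C)" using root_in[OF vC Cne] by auto
lemma cardR: "card R = card C - 1" using r_in fC by simp
lemma R_ne: "R \<noteq> {}" using cardR two by (metis card.empty diff_is_0_eq not_numeral_le_zero numeral_le_one_iff semiring_norm(69) one_le_numeral le_trans diff_le_self)
lemma vR: "valid R" by (rule valid_subset[OF vC Diff_subset])

lemma cs_ne: "comps_sorted R \<noteq> []"
proof
  assume "comps_sorted R = []"
  then have "components R = {}" using comps_sorted_props(1)[OF vR] by simp
  then show False using Union_comps[of R] R_ne by simp
qed

lemma cs: "comps_sorted R = K # Ks"
  unfolding first_comp_def using cs_ne by simp

lemma K_comp: "K \<in> components R"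
proof -
  have "set (K # Ks) = components R" by (subst cs[symmetric]) (rule comps_sorted_props(1)[OF vR])
  then show ?thesis by auto
qed
lemma K_sub: "K \<subseteq> R" using comps_sub[OF K_comp] .
lemma K_ne: "K \<noteq> {}" using comps_nonempty[OF K_comp] .
lemma vK: "valid K" using valid_subset[OF vR K_sub] .
lemma vL: "valid L" by (rule valid_subset[OF vC Diff_subset])

lemma Ks_set: "set Ks = components R - {K}"
proof -
  have "distinct (K # Ks)" by (subst cs[symmetric]) (rule comps_sorted_props(2)[OF vR])
  moreover have "set (K # Ks) = components R" by (subst cs[symmetric]) (rule comps_sorted_props(1)[OF vR])
  ultimately show ?thesis by auto
qed

lemma cs_RK: "comps_sorted (R - K) = Ks"
proof -
  have vRK: "valid (R - K)" by (rule valid_subset[OF vR Diff_subset])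
  have "sorted_wrt (<) (map min_end (K # Ks))" by (subst cs[symmetric]) (rule comps_sorted_props(3)[OF vR])
  then have s: "sorted_wrt (<) (map min_end Ks)" by (simp only: list.map sorted_wrt.simps)
  have i: "inj_on min_end (components (R - K))" using inj_min_end[OF vRK] .
  have f: "finite (components (R - K))" by (rule finite_comps[OF valid_finite[OF vRK]])
  have st: "set Ks = components (R - K)" by (simp only: Ks_set components_minus[OF K_comp])
  show ?thesis unfolding comps_sorted_def[of "R - K"] by (rule skl_unique[OF i f s st])
qed

lemma r_notK: "r \<notin> K" using subsetD[OF K_sub, of r] by blast
lemma r_L: "r \<in> L" using r_in(1) r_notK by simp

lemma rootL: "root L = r"
proof (rule root_char[OF vL r_L])
  have fL: "finite (ends L)" by (rule finite_ends[OF valid_finite[OF vL]])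
  have fCe: "finite (ends C)" by (rule finite_ends[OF fC])
  have a: "fst r \<in> ends L" using ends_in(1)[OF r_L] .
  have b: "Min (ends L) \<in> ends L" using Min_in[OF fL] a by blast
  have c: "ends L \<subseteq> ends C" by (rule ends_mono[OF Diff_subset])
  have "Min (ends L) \<le> fst r" using Min_le[OF fL a] .
  moreover have "fst r \<le> Min (ends L)" using r_in(2) Min_le[OF fCe] b c by auto
  ultimately show "fst r = Min (ends L)" by simp
qed

lemma L_minus: "L - {r} = R - K" by blast

lemma io_C: "int_order C = r # P @ Q"
proof -
  have e: "Suc (card C - 1) = card C" using two by simp
  have "int_order C = io (Suc (card C - 1)) C" unfolding int_order_def e ..
  also have "\<dots> = r # concat (map (io (card C - 1)) (comps_sorted R))"
    using Cne by (simp only: io.simps(2) if_False simp_thms)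
  also have "concat (map (io (card C - 1)) (comps_sorted R)) = P @ Q"
    using arg_cong[OF cs, of "\<lambda>xs. concat (map (io (card C - 1)) xs)"] by (simp only: list.map concat.simps)
  finally show ?thesis by (simp only: append_Cons)
qed

lemma card_L: "card L = Suc (card (R - K))"
proof -
  have "card (L - {r}) = card L - 1" using r_L by simp
  moreover have "card L > 0" using r_L valid_finite[OF vL] by (auto simp: card_gt_0_iff)
  ultimately have "card L = Suc (card (L - {r}))" by simp
  then show ?thesis by (simp only: L_minus)
qed

lemma card_RK: "card (R - K) \<le> card C - 1"
  using card_mono[OF valid_finite[OF vR], of "R - K"] cardR by auto

lemma io_L: "int_order L = r # Q"
proof -
  have Lne: "L \<noteq> {}" using r_L by blast
  have "int_order L = io (Suc (card (R - K))) L" unfolding int_order_def card_L ..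
  also have "\<dots> = r # concat (map (io (card (R - K))) Ks)"
    by (simp only: io.simps(2) if_not_P[OF Lne] rootL L_minus cs_RK)
  also have "map (io (card (R - K))) Ks = map (io (card C - 1)) Ks"
  proof (rule map_cong[OF refl])
    fix K' assume "K' \<in> set Ks"
    then have K': "K' \<in> components (R - K)" by (simp only: Ks_set components_minus[OF K_comp])
    have vRK: "valid (R - K)" by (rule valid_subset[OF vR Diff_subset])
    have sub: "K' \<subseteq> R - K" using comps_sub[OF K'] .
    have "card K' \<le> card (R - K)" using card_mono[OF valid_finite[OF vRK] sub] .
    then show "io (card (R - K)) K' = io (card C - 1) K'"
      using card_RK by (intro io_fuel[OF valid_subset[OF vRK sub]]) auto
  qed
  finally show ?thesis .
qed

lemma io_K: "int_order K = P"
proof -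
  have "card K \<le> card C - 1" using card_mono[OF valid_finite[OF vR] K_sub] cardR by simp
  then show ?thesis unfolding int_order_def by (intro io_fuel[OF vK]) auto
qed

lemma P_set: "set P = K" and P_len: "length P = card K"
  using int_order_props[OF vK] io_K by auto

lemma P_ne: "P \<noteq> []" using P_set K_ne by auto

lemma Q_set: "set Q = R - K" and Q_len: "length Q = card L - 1"
proof -
  have d: "distinct (r # Q)" using int_order_props(3)[OF vL] io_L by simp
  have s: "set (r # Q) = L" using int_order_props(1)[OF vL] io_L by simp
  show "set Q = R - K" using d s by auto
  show "length Q = card L - 1" using int_order_props(2)[OF vL] io_L by simp
qed

lemma card_C: "card C = Suc (card K + (card L - 1))"
  using int_order_props(2)[OF vC] io_C P_len Q_len by simp

lemma nc: "\<forall>x\<in>set P. \<forall>y\<in>set Q. \<not> crosses x y"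
proof (intro ballI)
  fix x y assume x: "x \<in> set P" and y: "y \<in> set Q"
  then have xK: "x \<in> K" and yRK: "y \<in> R - K" using P_set Q_set by auto
  have yc: "y \<in> comp R y" "comp R y \<in> components R" using yRK comp_self unfolding components_def by auto
  have "comp R y \<noteq> K" using yc yRK by blast
  then show "\<not> crosses x y" using comps_nocross[OF K_comp yc(2)] xK yc(1) by blast
qed

lemma r_cross_comp: "c \<in> R \<Longrightarrow> \<exists>x\<in>comp R c. crosses r x"
proof -
  assume c: "c \<in> R"
  have "(r, c) \<in> (cross_rel C)\<^sup>*" using conn r_in c unfolding connected_cd_def by blast
  then have "\<exists>x. crosses r x \<and> x \<in> R \<and> (x,c) \<in> (cross_rel R)\<^sup>*" using conn_path[of r c C] c by blast
  then obtain x where x: "crosses r x" "x \<in> R" "(x,c) \<in> (cross_rel R)\<^sup>*" by blast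
  have "(c,x) \<in> (cross_rel R)\<^sup>*" using rtr_sym[OF x(3)] .
  then have "x \<in> comp R c" using x(2) unfolding comp_def by blast
  then show ?thesis using x(1) by blast
qed

lemma r_cross_X: "\<exists>y\<in>set (P @ Q). crosses r y"
proof -
  obtain c where "c \<in> R" using R_ne by blast
  then obtain x where "x \<in> comp R c" "crosses r x" using r_cross_comp by blast
  moreover have "x \<in> R" using calculation(1) comp_sub[of R c] by blast
  moreover have "set (P @ Q) = R" using P_set Q_set K_sub by auto
  ultimately show ?thesis by blast
qed

lemma r_cross_Q: "Q \<noteq> [] \<Longrightarrow> \<exists>y\<in>set Q. crosses r y"
proof -
  assume "Q \<noteq> []"
  then obtain c where c: "c \<in> R - K" using Q_set by (metis all_not_in_conv set_empty)
  then obtain x where x: "x \<in> comp R c" "crosses r x" using r_cross_comp by blast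
  have cc: "c \<in> comp R c" "comp R c \<in> components R" using c comp_self unfolding components_def by auto
  have "comp R c \<noteq> K" using cc c by blast
  then have "x \<notin> K" using comps_disj[OF cc(2) K_comp] x(1) by blast
  moreover have "x \<in> R" using x(1) comp_sub[of R c] by blast
  ultimately show ?thesis using x(2) Q_set by blast
qed

end




lemma norm_valid: "valid L \<Longrightarrow> valid (norm_cd L)"
proof -
  assume v: "valid L"
  interpret relab L "rank L" using relab_norm[OF v] .
  show ?thesis unfolding norm_cd_def nmap_gmap using g_valid by blast
qed

lemma mono_lt: "valid S \<Longrightarrow> monomial a d S = hh (lterm (int_order S)) (\<lambda>i g. a (d (int_order S ! (i-1))) g)
    (\<lambda>i. a (d (int_order S ! (i-1))) 0) None 1 (card S)"
proof -
  assume v: "valid S"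
  have "(\<lambda>i. i \<in> terminals S) = lterm (int_order S)"
    using terminal_lterm[OF int_order_props(2)[OF v]] unfolding terminals_def by (intro ext) simp
  then show ?thesis unfolding monomial_hh chord_lab_def by simp
qed

lemma base_lt: "valid S \<Longrightarrow> base S = Min {i. lterm (int_order S) i}"
proof -
  assume v: "valid S"
  have "terminals S = {i. lterm (int_order S) i}"
    unfolding terminals_def using terminal_lterm[OF int_order_props(2)[OF v]] by auto
  then show ?thesis unfolding base_def by simp
qed

lemma lterm_fin: "finite {i. lterm xs i}"
proof -
  have "{i. lterm xs i} \<subseteq> {1..length xs}" unfolding lterm_def by auto
  then show ?thesis using finite_subset by blast
qed

lemma lterm_range: "lterm xs i \<Longrightarrow> 1 \<le> i \<and> i \<le> length xs"
  unfolding lterm_def by auto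

lemma min_lterm:
  assumes "xs \<noteq> []"
  shows "lterm xs (Min {i. lterm xs i})" "\<And>i. lterm xs i \<Longrightarrow> Min {i. lterm xs i} \<le> i"
proof -
  have ne: "{i. lterm xs i} \<noteq> {}" using lterm_last[OF assms] by blast
  show "lterm xs (Min {i. lterm xs i})" using Min_in[OF lterm_fin ne] by simp
  show "\<And>i. lterm xs i \<Longrightarrow> Min {i. lterm xs i} \<le> i" using Min_le[OF lterm_fin] by simp
qed

context rsd begin

lemma Lne: "L \<noteq> {}" using r_L by blast

lemma card_L': "card L = Suc (card L - 1)" using card_L by simp

lemma main:
  fixes a :: "nat \<Rightarrow> nat \<Rightarrow> 'r::comm_ring_1" and d :: "chord \<Rightarrow> nat" and l :: nat
  assumes l: "1 < l" "l < base C"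
  shows "monomial a d C * a (d (chord_lab C (base C))) (base C - l)
       = monomial a (inherit d (C - first_comp C)) (rs_left C)
           * a (inherit d (C - first_comp C) (chord_lab (rs_left C) (base (rs_left C))))
               (base (rs_left C) - 1)
         * monomial a (inherit d (first_comp C)) (rs_right C)
           * a (inherit d (first_comp C) (chord_lab (rs_right C) (base (rs_right C))))
               (base (rs_right C) - l + 1)"
proof -
  define m where "m = card K"
  define q where "q = card L - 1"
  define X where "X = r # P @ Q"
  define C1 where "C1 = rs_left C"
  define C2 where "C2 = rs_right C"
  define e1 where "e1 = inherit d L"
  define e2 where "e2 = inherit d K"
  define F1 where "F1 = lterm (r # Q)"
  define G1 where "G1 = (\<lambda>i g. a (d ((r # Q) ! (i-1))) g)"
  define H1 where "H1 = (\<lambda>i. a (d ((r # Q) ! (i-1))) 0)"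
  define F2 where "F2 = lterm P"
  define G2 where "G2 = (\<lambda>i g. a (d (P ! (i-1))) g)"
  define H2 where "H2 = (\<lambda>i. a (d (P ! (i-1))) 0)"
  define FC where "FC = lterm X"
  define GC where "GC = (\<lambda>i g. a (d (X ! (i-1))) g)"
  define HC where "HC = (\<lambda>i. a (d (X ! (i-1))) 0)"
  have lenP: "length P = m" using P_len m_def by simp
  have lenQ: "length Q = q" using Q_len q_def by simp
  have cardC: "card C = Suc (m + q)" using card_C m_def q_def by simp
  have m1: "m \<ge> 1" using P_ne lenP by (cases P) auto
  have ioC: "int_order C = X" using io_C X_def by simp
  have setL: "set (r # Q) = L" using int_order_props(1)[OF vL] io_L by simp
  have io1: "int_order C1 = map (nmap L) (r # Q)" unfolding C1_def rs_left_def using norm_int_order[OF vL] io_L by simp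
  have io2: "int_order C2 = map (nmap K) P" unfolding C2_def rs_right_def using norm_int_order[OF vK] io_K by simp
  have card1: "card C1 = Suc q" unfolding C1_def rs_left_def q_def using norm_card[OF vL] card_L' by simp
  have card2: "card C2 = m" unfolding C2_def rs_right_def m_def using norm_card[OF vK] by simp
  have v1: "valid C1" unfolding C1_def rs_left_def using norm_valid[OF vL] .
  have v2: "valid C2" unfolding C2_def rs_right_def using norm_valid[OF vK] .
  have lt1: "lterm (int_order C1) = F1"
  proof -
    have "\<forall>x\<in>set (r#Q). \<forall>y\<in>set (r#Q). crosses (nmap L x) (nmap L y) = crosses x y"
      using norm_cross[OF vL] setL by blast
    then show ?thesis unfolding io1 F1_def using lterm_map by (intro ext) blast
  qed
  have lt2: "lterm (int_order C2) = F2"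
  proof -
    have "\<forall>x\<in>set P. \<forall>y\<in>set P. crosses (nmap K x) (nmap K y) = crosses x y"
      using norm_cross[OF vK] P_set by blast
    then show ?thesis unfolding io2 F2_def using lterm_map by (intro ext) blast
  qed
  have M1: "monomial a e1 C1 = hh F1 G1 H1 None 1 (Suc q)"
  proof -
    have "monomial a e1 C1 = hh F1 (\<lambda>i g. a (e1 (int_order C1 ! (i-1))) g) (\<lambda>i. a (e1 (int_order C1 ! (i-1))) 0) None 1 (Suc q)"
      using mono_lt[OF v1, of a e1] lt1 card1 by simp
    also have "\<dots> = hh F1 G1 H1 None 1 (Suc q)"
    proof (rule hh_transfer, intro allI impI)
      fix i assume i: "i < Suc q"
      then have il: "i < length (r # Q)" using lenQ by simp
      have cL: "(r#Q) ! i \<in> L" using nth_mem[OF il] setL by blast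
      have "int_order C1 ! i = nmap L ((r#Q) ! i)" unfolding io1 by (rule nth_map[OF il])
      then have "e1 (int_order C1 ! (1 + i - 1)) = d ((r#Q) ! (1 + i - 1))"
        using norm_inherit[OF vL cL] unfolding e1_def by simp
      then show "F1 (1 + i) = F1 (1 + i) \<and> (\<lambda>g. a (e1 (int_order C1 ! (1 + i - 1))) g) = G1 (1 + i)
          \<and> a (e1 (int_order C1 ! (1 + i - 1))) 0 = H1 (1 + i)"
        unfolding G1_def H1_def by simp
    qed
    finally show ?thesis .
  qed
  have M2: "monomial a e2 C2 = hh F2 G2 H2 None 1 m"
  proof -
    have "monomial a e2 C2 = hh F2 (\<lambda>i g. a (e2 (int_order C2 ! (i-1))) g) (\<lambda>i. a (e2 (int_order C2 ! (i-1))) 0) None 1 m"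
      using mono_lt[OF v2, of a e2] lt2 card2 by simp
    also have "\<dots> = hh F2 G2 H2 None 1 m"
    proof (rule hh_transfer, intro allI impI)
      fix i assume i: "i < m"
      then have il: "i < length P" using lenP by simp
      have cK: "P ! i \<in> K" using nth_mem[OF il] P_set by blast
      have "int_order C2 ! i = nmap K (P ! i)" unfolding io2 by (rule nth_map[OF il])
      then have "e2 (int_order C2 ! (1 + i - 1)) = d (P ! (1 + i - 1))"
        using norm_inherit[OF vK cK] unfolding e2_def by simp
      then show "F2 (1 + i) = F2 (1 + i) \<and> (\<lambda>g. a (e2 (int_order C2 ! (1 + i - 1))) g) = G2 (1 + i)
          \<and> a (e2 (int_order C2 ! (1 + i - 1))) 0 = H2 (1 + i)"
        unfolding G2_def H2_def by simp
    qed
    finally show ?thesis .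
  qed
  have MC: "monomial a d C = hh FC GC HC None 1 (Suc (m + q))"
    using mono_lt[OF vC, of a d] ioC cardC unfolding FC_def GC_def HC_def by simp
  have FC1: "\<not> FC 1" unfolding FC_def X_def lterm_Cons1 using r_cross_X by blast
  have FCP: "\<And>i. 1 \<le> i \<Longrightarrow> i \<le> m \<Longrightarrow> FC (Suc i) = F2 i"
    unfolding FC_def X_def F2_def using lterm_Cons lterm_app1[OF nc] lenP by simp
  have FCQ: "\<And>i. 1 \<le> i \<Longrightarrow> FC (Suc (m + i)) = F1 (Suc i)"
  proof -
    fix i :: nat assume i: "1 \<le> i"
    have "FC (Suc (m + i)) = lterm (P @ Q) (m + i)" unfolding FC_def X_def using lterm_Cons i by simp
    also have "\<dots> = lterm Q i" using lterm_app2[OF i, of P Q] lenP by simp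
    also have "\<dots> = F1 (Suc i)" unfolding F1_def using lterm_Cons i by simp
    finally show "FC (Suc (m + i)) = F1 (Suc i)" .
  qed
  have XP: "\<And>i. i < m \<Longrightarrow> X ! (Suc i) = P ! i" unfolding X_def using lenP by (simp add: nth_append)
  have XQ: "\<And>i. X ! (Suc (m + i)) = Q ! i" unfolding X_def using lenP by (simp add: nth_append)
  have F2m: "F2 m" unfolding F2_def using lterm_last[OF P_ne] lenP by simp
  have hC1: "hh FC GC HC None 1 1 = a (d r) 0"
    using FC1 unfolding HC_def X_def by simp
  have saC1: "sa FC None 1 1 = None" using FC1 by simp
  have saC2: "sa FC None 2 m = Some 1"
  proof -
    obtain m' where m': "m = Suc m'" using m1 by (cases m) auto
    have "FC (2 + m') = F2 m" using FCP[of m] m1 m' by simp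
    then show ?thesis using sa_last[of FC 2 m' None] m' F2m by simp
  qed
  have hCP: "hh FC GC HC None 2 m = hh F2 G2 H2 None 1 m"
  proof (rule hh_transfer, intro allI impI)
    fix i assume i: "i < m"
    have "FC (2 + i) = F2 (1 + i)" using FCP[of "1 + i"] i by simp
    moreover have "X ! (2 + i - 1) = P ! (1 + i - 1)" using XP[OF i] by simp
    ultimately show "FC (2 + i) = F2 (1 + i) \<and> GC (2 + i) = G2 (1 + i) \<and> HC (2 + i) = H2 (1 + i)"
      unfolding GC_def G2_def HC_def H2_def by simp
  qed
  have hCQ: "hh FC GC HC (Some 1) (2 + m) q = hh F1 G1 H1 (Some 1) 2 q"
  proof (rule hh_transfer, intro allI impI)
    fix i assume i: "i < q"
    have "FC (2 + m + i) = F1 (2 + i)" using FCQ[of "Suc i"] by simp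
    moreover have "X ! (2 + m + i - 1) = (r # Q) ! (2 + i - 1)" using XQ[of i] by simp
    ultimately show "FC (2 + m + i) = F1 (2 + i) \<and> GC (2 + m + i) = G1 (2 + i) \<and> HC (2 + m + i) = H1 (2 + i)"
      unfolding GC_def G1_def HC_def H1_def by simp
  qed
  have MCdec: "monomial a d C = a (d r) 0 * hh F2 G2 H2 None 1 m * hh F1 G1 H1 (Some 1) 2 q"
  proof -
    have "hh FC GC HC None 1 (Suc (m + q)) = hh FC GC HC None 1 (1 + (m + q))" by simp
    also have "\<dots> = a (d r) 0 * hh FC GC HC None 2 (m + q)"
      unfolding hh_append[of FC GC HC None 1 1 "m + q"] hC1 saC1 one_add_one ..
    also have "hh FC GC HC None 2 (m + q) = hh F2 G2 H2 None 1 m * hh F1 G1 H1 (Some 1) 2 q"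
      unfolding hh_append[of FC GC HC None 2 m q] saC2 hCP hCQ ..
    finally show ?thesis using MC by (simp add: mult.assoc)
  qed
  define b2 where "b2 = Min {i. F2 i}"
  have b2: "F2 b2" "\<And>i. F2 i \<Longrightarrow> b2 \<le> i" unfolding b2_def F2_def using min_lterm[OF P_ne] by auto
  have b2r: "1 \<le> b2" "b2 \<le> m" using lterm_range[OF b2(1)[unfolded F2_def]] lenP by auto
  have baseC2: "base C2 = b2" unfolding base_lt[OF v2] lt2 b2_def ..
  have baseC: "base C = Suc b2"
  proof -
    have "Min {i. FC i} = Suc b2"
    proof (rule Min_eqI)
      show "finite {i. FC i}" unfolding FC_def by (rule lterm_fin)
      show "Suc b2 \<in> {i. FC i}" using FCP[OF b2r] b2(1) by simp
      fix y assume "y \<in> {i. FC i}"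
      then have y: "FC y" by simp
      then have "y \<noteq> 0" unfolding FC_def using lterm_range by fastforce
      then obtain j where j: "y = Suc j" by (cases y) auto
      have "j \<noteq> 0"
      proof
        assume "j = 0" then show False using y j FC1 by simp
      qed
      show "Suc b2 \<le> y"
      proof (rule ccontr)
        assume "\<not> Suc b2 \<le> y"
        then have "j < b2" using j by simp
        then have "F2 j" using FCP[of j] y j \<open>j \<noteq> 0\<close> b2r by simp
        then show False using b2(2) \<open>j < b2\<close> by fastforce
      qed
    qed
    then show ?thesis unfolding base_lt[OF vC] ioC FC_def .
  qed
  have labC: "d (chord_lab C (base C)) = d (P ! (b2 - 1))"
    unfolding chord_lab_def baseC ioC using XP[of "b2 - 1"] b2r by simp
  have labC2: "e2 (chord_lab C2 (base C2)) = d (P ! (b2 - 1))"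
  proof -
    have il: "b2 - 1 < length P" using b2r lenP by simp
    have cK: "P ! (b2 - 1) \<in> K" using nth_mem[OF il] P_set by blast
    have "int_order C2 ! (b2 - 1) = nmap K (P ! (b2 - 1))" unfolding io2 by (rule nth_map[OF il])
    then show ?thesis unfolding chord_lab_def baseC2 e2_def using norm_inherit[OF vK cK] by simp
  qed
  have left: "monomial a e1 C1 * a (e1 (chord_lab C1 (base C1))) (base C1 - 1) = a (d r) 0 * hh F1 G1 H1 (Some 1) 2 q"
  proof (cases "q = 0")
    case True
    have l1: "length (r # Q) = 1" using lenQ True by simp
    have "lterm (r#Q) (length (r#Q))" by (rule lterm_last) simp
    then have F11: "F1 1" unfolding F1_def by (simp only: l1)
    have bC1: "base C1 = 1"
    proof -
      have "{i. F1 i} = {1}"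
      proof (intro set_eqI iffI)
        fix i assume "i \<in> {i. F1 i}"
        then have "1 \<le> i \<and> i \<le> length (r # Q)" unfolding F1_def using lterm_range[of "r # Q" i] by blast
        then have "1 \<le> i \<and> i \<le> 1" by (simp only: l1)
        then show "i \<in> {1}" by simp
      next
        fix i assume "i \<in> {1::nat}"
        then show "i \<in> {i. F1 i}" using F11 by simp
      qed
      then show ?thesis unfolding base_lt[OF v1] lt1 by simp
    qed
    have "e1 (chord_lab C1 (base C1)) = d r"
      unfolding bC1 chord_lab_def io1 e1_def using norm_inherit[OF vL r_L] by simp
    moreover have "monomial a e1 C1 = 1" using M1 True F11 by simp
    ultimately show ?thesis using True bC1 by simp
  next
    case False
    have nF11: "\<not> F1 1" unfolding F1_def lterm_Cons1 using r_cross_Q False lenQ by auto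
    define b1 where "b1 = Min {i. F1 i}"
    have b1: "F1 b1" "\<And>i. F1 i \<Longrightarrow> b1 \<le> i" unfolding b1_def F1_def using min_lterm[of "r # Q"] by auto
    have b1r: "2 \<le> b1" "b1 \<le> Suc q"
    proof -
      have "1 \<le> b1 \<and> b1 \<le> length (r # Q)" using lterm_range b1(1)[unfolded F1_def] .
      moreover have "b1 \<noteq> 1" using b1(1) nF11 by auto
      ultimately show "2 \<le> b1" "b1 \<le> Suc q" using lenQ by auto
    qed
    have bC1: "base C1 = b1" unfolding base_lt[OF v1] lt1 b1_def ..
    have lab1: "e1 (chord_lab C1 (base C1)) = d ((r # Q) ! (b1 - 1))"
    proof -
      have il: "b1 - 1 < length (r # Q)" using b1r lenQ by simp
      have cL: "(r#Q) ! (b1 - 1) \<in> L" using nth_mem[OF il] setL by blast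
      have "int_order C1 ! (b1 - 1) = nmap L ((r#Q) ! (b1 - 1))" unfolding io1 by (rule nth_map[OF il])
      then show ?thesis unfolding chord_lab_def bC1 e1_def using norm_inherit[OF vL cL] by simp
    qed
    have "monomial a e1 C1 = hh F1 G1 H1 None 1 (1 + q)" using M1 by simp
    also have "\<dots> = a (d r) 0 * hh F1 G1 H1 None 2 q"
    proof -
      have h11: "hh F1 G1 H1 None 1 1 = a (d r) 0" using nF11 unfolding H1_def by simp
      have s11: "sa F1 None 1 1 = None" using nF11 by simp
      show ?thesis unfolding hh_append[of F1 G1 H1 None 1 1 q] h11 s11 one_add_one ..
    qed
    finally have m1e: "monomial a e1 C1 = a (d r) 0 * hh F1 G1 H1 None 2 q" .
    have first: "hh F1 G1 H1 (Some 1) 2 q = hh F1 G1 H1 None 2 q * G1 b1 (1 + (b1 - 2))"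
    proof (rule hh_first)
      show "b1 \<in> {2..<2 + q}" using b1r by auto
      show "F1 b1" by (rule b1(1))
      show "\<forall>i\<in>{2..<b1}. \<not> F1 i" using b1(2) by fastforce
    qed
    have "1 + (b1 - 2) = b1 - 1" using b1r by simp
    then show ?thesis using m1e first lab1 bC1 unfolding G1_def by (simp add: mult.assoc)
  qed
  have lb: "Suc b2 - l = b2 - l + 1" using l baseC by simp
  show ?thesis
    unfolding C1_def[symmetric] C2_def[symmetric] e1_def[symmetric] e2_def[symmetric]
    using MCdec M2 left labC labC2 baseC baseC2 lb by (simp add: ac_simps)
qed

end


theorem mainTheorem4:
  fixes a :: "nat \<Rightarrow> nat \<Rightarrow> 'r::comm_ring_1"
    and C :: "chord set" and d :: "chord \<Rightarrow> nat" and l :: nat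
  assumes "is_cd C" and "connected_cd C" and "card C \<ge> 2"
    and "\<forall>c\<in>C. d c \<ge> 1"
    and "1 < l" and "l < base C"
  shows "monomial a d C * a (d (chord_lab C (base C))) (base C - l)
       = monomial a (inherit d (C - first_comp C)) (rs_left C)
           * a (inherit d (C - first_comp C) (chord_lab (rs_left C) (base (rs_left C))))
               (base (rs_left C) - 1)
         * monomial a (inherit d (first_comp C)) (rs_right C)
           * a (inherit d (first_comp C) (chord_lab (rs_right C) (base (rs_right C))))
               (base (rs_right C) - l + 1)"
proof -
  interpret rsd C using assms(1-3) by unfold_locales
  show ?thesis using main[OF assms(5) assms(6)] .
qed

end
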